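(* Let $\Omega\subset\mathbb{R}^n$ be a bounded domain that is star-shaped with respect to a point $x^*\in\Omega$, and let $g\in C(\Omega)$. Let $u$ be a viscosity subsolution of \[ \min\{u(x)-g(x),\ (x-x^* )\cdot\nabla u(x)\}=0 \quad\text{in }\Omega \] such that $u(x^* )\le g(x^* )$, and let $v$ be a viscosity supersolution of the same equation. Then $u\le v$ in $\Omega$.
   Context: Let $F(x,r,p)=\min\{r-g(x),(x-x^* )\cdot p\}$. An upper semicontinuous $u:\Omega\to\mathbb{R}$ is a viscosity subsolution of $F[u]=0$ in $\Omega$ if for every $\phi\in C^1(\Omega)$, whenever $u-\phi$ has a local maximum at $x\in\Omega$, $F(x,u(x),\nabla\phi(x))\le 0$. A lower semicontinuous $v:\Omega\to\mathbb{R}$ is a viscosity supersolution if for every $\phi\in C^1(\Omega)$, whenever $v-\phi$ has a local minimum at $x\in\Omega$, $F(x,v(x),\nabla\phi(x))\ge 0$. *)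

theory Defs
  imports "HOL-Analysis.Analysis"
begin

definition usc_on :: "'a::metric_space set \<Rightarrow> ('a \<Rightarrow> real) \<Rightarrow> bool" where
  "usc_on S u \<longleftrightarrow> (\<forall>x\<in>S. \<forall>e>0. \<exists>d>0. \<forall>y\<in>S. dist y x < d \<longrightarrow> u y < u x + e)"

definition lsc_on :: "'a::metric_space set \<Rightarrow> ('a \<Rightarrow> real) \<Rightarrow> bool" where
  "lsc_on S u \<longleftrightarrow> (\<forall>x\<in>S. \<forall>e>0. \<exists>d>0. \<forall>y\<in>S. dist y x < d \<longrightarrow> u x - e < u y)"

definition C1_on :: "'a::euclidean_space set \<Rightarrow> ('a \<Rightarrow> real) \<Rightarrow> ('a \<Rightarrow> 'a) \<Rightarrow> bool" where
  "C1_on S phi Dphi \<longleftrightarrow>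
     (\<forall>x\<in>S. (phi has_derivative (\<lambda>h. Dphi x \<bullet> h)) (at x)) \<and> continuous_on S Dphi"

definition F_ham :: "('a::euclidean_space \<Rightarrow> real) \<Rightarrow> 'a \<Rightarrow> 'a \<Rightarrow> real \<Rightarrow> 'a \<Rightarrow> real" where
  "F_ham g xs x r p = min (r - g x) ((x - xs) \<bullet> p)"

definition visc_subsol :: "'a::euclidean_space set \<Rightarrow> ('a \<Rightarrow> real) \<Rightarrow> 'a \<Rightarrow> ('a \<Rightarrow> real) \<Rightarrow> bool" where
  "visc_subsol \<Omega> g xs u \<longleftrightarrow> usc_on \<Omega> u \<and>
     (\<forall>phi Dphi x. C1_on \<Omega> phi Dphi \<and> x \<in> \<Omega> \<and>
        (\<exists>d>0. \<forall>y\<in>\<Omega>. dist y x < d \<longrightarrow> u y - phi y \<le> u x - phi x)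
        \<longrightarrow> F_ham g xs x (u x) (Dphi x) \<le> 0)"

definition visc_supersol :: "'a::euclidean_space set \<Rightarrow> ('a \<Rightarrow> real) \<Rightarrow> 'a \<Rightarrow> ('a \<Rightarrow> real) \<Rightarrow> bool" where
  "visc_supersol \<Omega> g xs v \<longleftrightarrow> lsc_on \<Omega> v \<and>
     (\<forall>phi Dphi x. C1_on \<Omega> phi Dphi \<and> x \<in> \<Omega> \<and>
        (\<exists>d>0. \<forall>y\<in>\<Omega>. dist y x < d \<longrightarrow> v x - phi x \<le> v y - phi y)
        \<longrightarrow> F_ham g xs x (v x) (Dphi x) \<ge> 0)"

end

theory Submission
  imports Defs
begin

definition pp :: "real \<Rightarrow> real" where "pp s = (max 0 s)^2"

lemma pp_deriv: "(pp has_real_derivative (2 * max 0 s)) (at s)"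
proof (cases "s > 0")
  case True
  have "((\<lambda>t. t^2) has_real_derivative (2 * max 0 s)) (at s)"
    using True by (auto intro!: derivative_eq_intros)
  then show ?thesis
    by (rule has_field_derivative_transform_within_open[where S="{0<..}"])
       (use True in \<open>auto simp: pp_def\<close>)
next
  case F: False
  show ?thesis
  proof (cases "s < 0")
    case True
    have "((\<lambda>t. 0) has_real_derivative (2 * max 0 s)) (at s)"
      using True by (auto intro!: derivative_eq_intros)
    then show ?thesis
      by (rule has_field_derivative_transform_within_open[where S="{..<0}"])
         (use True in \<open>auto simp: pp_def\<close>)
  next
    case False
    then have s0: "s = 0" using F by simp
    have lim: "((\<lambda>y. max 0 y) \<longlongrightarrow> 0) (at (0::real))"
      by (rule tendsto_eq_intros) (auto intro!: tendsto_eq_intros)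
    have "((\<lambda>y. (pp y - pp 0) / (y - 0)) \<longlongrightarrow> 0) (at (0::real))"
    proof (rule Lim_transform_eventually[OF lim])
      show "\<forall>\<^sub>F y in at 0. max 0 y = (pp y - pp 0) / (y - 0)"
        unfolding eventually_at_filter
        by (auto simp: pp_def max_def power2_eq_square)
    qed
    then show ?thesis using s0 by (simp add: has_field_derivative_iff)
  qed
qed

lemma sq_hasderiv:
  fixes a :: "'a::real_inner"
  shows "((\<lambda>x. (x - a) \<bullet> (x - a)) has_derivative (\<lambda>h. (2 *\<^sub>R (x - a)) \<bullet> h)) (at x)"
  by (auto intro!: derivative_eq_intros simp: inner_commute algebra_simps)

lemma hd_add:
  assumes "(f has_derivative (\<lambda>h. A \<bullet> h)) F" "(g has_derivative (\<lambda>h. B \<bullet> h)) F"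
  shows "((\<lambda>x. f x + g x) has_derivative (\<lambda>h. (A + B) \<bullet> h)) F"
  using has_derivative_add[OF assms] by (simp add: inner_add_left)

lemma hd_scale:
  assumes "(f has_derivative (\<lambda>h. A \<bullet> h)) F"
  shows "((\<lambda>x. k * f x) has_derivative (\<lambda>h. (k *\<^sub>R A) \<bullet> h)) F"
  using has_derivative_mult_right[OF assms, of k] by simp

lemma hd_pp_comp:
  fixes e a :: "'a::real_inner"
  shows "((\<lambda>y. pp ((y - a) \<bullet> e * k - c)) has_derivative (\<lambda>h. ((2 * max 0 ((x - a) \<bullet> e * k - c) * k) *\<^sub>R e) \<bullet> h)) (at x)"
proof -
  have l: "((\<lambda>y. (y - a) \<bullet> e * k - c) has_derivative (\<lambda>h. (e \<bullet> h) * k)) (at x)"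
    by (auto intro!: derivative_eq_intros simp: inner_commute)
  have "((\<lambda>y. pp ((y - a) \<bullet> e * k - c)) has_derivative (\<lambda>h. (2 * max 0 ((x - a) \<bullet> e * k - c)) * ((e \<bullet> h) * k))) (at x)"
    using has_derivative_compose[OF l pp_deriv[unfolded has_field_derivative_def]] by simp
  then show ?thesis by (simp add: algebra_simps)
qed

lemma psi_deriv:
  fixes xs e :: "'a::real_inner"
  shows "((\<lambda>x. (x-xs)\<bullet>(x-xs) - ((x-xs)\<bullet>e)^2 + pp ((x-xs)\<bullet>e - l) + pp (-((x-xs)\<bullet>e)))
     has_derivative (\<lambda>h. (2 *\<^sub>R (x-xs) + (2*max 0 ((x-xs)\<bullet>e - l) - 2*max 0 (-((x-xs)\<bullet>e)) - 2*((x-xs)\<bullet>e)) *\<^sub>R e) \<bullet> h)) (at x)"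
proof -
  have q: "((\<lambda>x. ((x-xs)\<bullet>e)^2) has_derivative (\<lambda>h. ((2*((x-xs)\<bullet>e)) *\<^sub>R e) \<bullet> h)) (at x)"
    by (auto intro!: derivative_eq_intros simp: inner_commute algebra_simps)
  have "((\<lambda>x. (x-xs)\<bullet>(x-xs) + (-1) * ((x-xs)\<bullet>e)^2 + pp ((x-xs)\<bullet>e * 1 - l) + pp ((x-xs)\<bullet>e * (-1) - 0))
     has_derivative (\<lambda>h. (2 *\<^sub>R (x-xs) + (-1) *\<^sub>R ((2*((x-xs)\<bullet>e)) *\<^sub>R e) + ((2 * max 0 ((x - xs) \<bullet> e * 1 - l) * 1) *\<^sub>R e)
       + ((2 * max 0 ((x - xs) \<bullet> e * (-1) - 0) * (-1)) *\<^sub>R e)) \<bullet> h)) (at x)"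
    by (intro hd_add hd_scale sq_hasderiv q hd_pp_comp)
  then show ?thesis by (simp add: algebra_simps)
qed


lemma usc_attains_max:
  fixes f :: "'b::metric_space \<Rightarrow> real"
  assumes "compact S" "S \<noteq> {}" "usc_on S f"
  shows "\<exists>x\<in>S. \<forall>y\<in>S. f y \<le> f x"
proof (rule ccontr)
  assume H: "\<not> ?thesis"
  have "\<forall>x\<in>S. \<exists>d>0. \<exists>y\<in>S. \<forall>z\<in>S. dist z x < d \<longrightarrow> f z < f y"
  proof
    fix x assume x: "x \<in> S"
    then obtain y where y: "y \<in> S" "f y > f x" using H by (meson not_le)
    obtain d where d: "d > 0" "\<forall>z\<in>S. dist z x < d \<longrightarrow> f z < f x + (f y - f x)"
      using assms(3) x y unfolding usc_on_def by (meson diff_gt_0_iff_gt)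
    show "\<exists>d>0. \<exists>y\<in>S. \<forall>z\<in>S. dist z x < d \<longrightarrow> f z < f y"
      using d y by auto
  qed
  then obtain d y where dy: "\<And>x. x \<in> S \<Longrightarrow> d x > 0 \<and> y x \<in> S \<and> (\<forall>z\<in>S. dist z x < d x \<longrightarrow> f z < f (y x))"
    by metis
  obtain X where X: "X \<subseteq> S" "finite X" "S \<subseteq> (\<Union>c\<in>X. ball c (d c))"
    using assms(1)
  proof (rule compactE_image)
    show "open (ball x (d x))" if "x \<in> S" for x by simp
    show "S \<subseteq> (\<Union>c\<in>S. ball c (d c))" using dy by force
  qed auto
  have "X \<noteq> {}" using X assms(2) by auto
  define M where "M = Max ((\<lambda>c. f (y c)) ` X)"
  have "M \<in> (\<lambda>c. f (y c)) ` X"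
    unfolding M_def using X \<open>X \<noteq> {}\<close> by (intro Max_in) auto
  then obtain c0 where c0: "c0 \<in> X" "M = f (y c0)" by blast
  have "y c0 \<in> S" using dy c0 X by auto
  then obtain c where c: "c \<in> X" "y c0 \<in> ball c (d c)" using X by auto
  have "f (y c0) < f (y c)" using dy[of c] c X \<open>y c0 \<in> S\<close> by (auto simp: dist_commute)
  moreover have "f (y c) \<le> M" unfolding M_def using X c by (intro Max_ge) auto
  ultimately show False using c0 by simp
qed

lemma usc_subset: "usc_on S f \<Longrightarrow> T \<subseteq> S \<Longrightarrow> usc_on T f"
  unfolding usc_on_def by blast

lemma lsc_subset: "lsc_on S f \<Longrightarrow> T \<subseteq> S \<Longrightarrow> lsc_on T f"
  unfolding lsc_on_def by blast

lemma lsc_neg: "lsc_on S f \<Longrightarrow> usc_on S (\<lambda>x. - f x)"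
  unfolding lsc_on_def usc_on_def by force

lemma usc_add: "usc_on S f \<Longrightarrow> usc_on S g \<Longrightarrow> usc_on S (\<lambda>x. f x + g x)"
  unfolding usc_on_def
proof (intro ballI allI impI)
  fix x and e :: real
  assume f: "\<forall>x\<in>S. \<forall>e>0. \<exists>d>0. \<forall>y\<in>S. dist y x < d \<longrightarrow> f y < f x + e"
    and g: "\<forall>x\<in>S. \<forall>e>0. \<exists>d>0. \<forall>y\<in>S. dist y x < d \<longrightarrow> g y < g x + e"
    and x: "x \<in> S" and e: "0 < e"
  obtain d1 where d1: "d1 > 0" "\<forall>y\<in>S. dist y x < d1 \<longrightarrow> f y < f x + e/2"
    using f x e by (meson half_gt_zero)
  obtain d2 where d2: "d2 > 0" "\<forall>y\<in>S. dist y x < d2 \<longrightarrow> g y < g x + e/2"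
    using g x e by (meson half_gt_zero)
  show "\<exists>d>0. \<forall>y\<in>S. dist y x < d \<longrightarrow> f y + g y < f x + g x + e"
  proof (intro exI[of _ "min d1 d2"] conjI ballI impI)
    show "min d1 d2 > 0" using d1 d2 by simp
    fix y assume "y \<in> S" "dist y x < min d1 d2"
    then have "f y < f x + e/2" "g y < g x + e/2" using d1 d2 by auto
    then show "f y + g y < f x + g x + e" by linarith
  qed
qed

lemma cont_usc:
  assumes "continuous_on S f" shows "usc_on S f"
  unfolding usc_on_def
proof (intro ballI allI impI)
  fix x and e :: real assume x: "x \<in> S" and e: "e > 0"
  obtain d where d: "d > 0" "\<forall>y\<in>S. dist y x < d \<longrightarrow> dist (f y) (f x) < e"
    using assms x e unfolding continuous_on_iff by blast
  show "\<exists>d>0. \<forall>y\<in>S. dist y x < d \<longrightarrow> f y < f x + e"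
  proof (intro exI[of _ d] conjI ballI impI)
    show "d > 0" by fact
    fix y assume "y \<in> S" "dist y x < d"
    then have "dist (f y) (f x) < e" using d by blast
    then show "f y < f x + e" unfolding dist_real_def by linarith
  qed
qed

lemma usc_fst:
  assumes "usc_on S f" shows "usc_on (S \<times> T) (\<lambda>p. f (fst p))"
  unfolding usc_on_def
proof (intro ballI allI impI)
  fix p and e :: real assume p: "p \<in> S \<times> T" and e: "e > 0"
  then have "fst p \<in> S" by (auto simp: mem_Times_iff)
  then obtain d where d: "d > 0" "\<forall>y\<in>S. dist y (fst p) < d \<longrightarrow> f y < f (fst p) + e"
    using assms e unfolding usc_on_def by blast
  show "\<exists>d>0. \<forall>q\<in>S \<times> T. dist q p < d \<longrightarrow> f (fst q) < f (fst p) + e"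
  proof (intro exI[of _ d] conjI ballI impI)
    show "d > 0" by fact
    fix q assume q: "q \<in> S \<times> T" "dist q p < d"
    have "dist (fst q) (fst p) \<le> dist q p" by (rule dist_fst_le)
    moreover have "fst q \<in> S" using q by (auto simp: mem_Times_iff)
    ultimately show "f (fst q) < f (fst p) + e" using d q by auto
  qed
qed

lemma usc_snd:
  assumes "usc_on T f" shows "usc_on (S \<times> T) (\<lambda>p. f (snd p))"
  unfolding usc_on_def
proof (intro ballI allI impI)
  fix p and e :: real assume p: "p \<in> S \<times> T" and e: "e > 0"
  then have "snd p \<in> T" by (auto simp: mem_Times_iff)
  then obtain d where d: "d > 0" "\<forall>y\<in>T. dist y (snd p) < d \<longrightarrow> f y < f (snd p) + e"
    using assms e unfolding usc_on_def by blast
  show "\<exists>d>0. \<forall>q\<in>S \<times> T. dist q p < d \<longrightarrow> f (snd q) < f (snd p) + e"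
  proof (intro exI[of _ d] conjI ballI impI)
    show "d > 0" by fact
    fix q assume q: "q \<in> S \<times> T" "dist q p < d"
    have "dist (snd q) (snd p) \<le> dist q p" by (rule dist_snd_le)
    moreover have "snd q \<in> T" using q by (auto simp: mem_Times_iff)
    ultimately show "f (snd q) < f (snd p) + e" using d q by auto
  qed
qed


theorem proposition3p14:
  fixes \<Omega> :: "'a::euclidean_space set" and xs :: 'a
    and g u v :: "'a \<Rightarrow> real"
  assumes "open \<Omega>" and "connected \<Omega>" and "bounded \<Omega>"
    and "xs \<in> \<Omega>" and "\<forall>x\<in>\<Omega>. closed_segment xs x \<subseteq> \<Omega>"
    and "continuous_on \<Omega> g"
    and "visc_subsol \<Omega> g xs u" and "u xs \<le> g xs"
    and "visc_supersol \<Omega> g xs v"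
  shows "\<forall>x\<in>\<Omega>. u x \<le> v x"
proof
  fix x0 assume x0: "x0 \<in> \<Omega>"
  show "u x0 \<le> v x0"
  proof (rule ccontr)
    assume "\<not> u x0 \<le> v x0"
    define \<delta> where "\<delta> = u x0 - v x0"
    have \<delta>: "\<delta> > 0" using \<open>\<not> u x0 \<le> v x0\<close> unfolding \<delta>_def by simp
    define a where "a = x0 - xs"
    define l where "l = norm a"
    define e where "e = (if a = 0 then (SOME b. b \<in> (Basis::'a set)) else a /\<^sub>R l)"
    have l0: "l \<ge> 0" unfolding l_def by simp
    have e1: "e \<bullet> e = 1"
    proof (cases "a = 0")
      case True
      have "(SOME b. b \<in> (Basis::'a set)) \<in> Basis" by (rule someI_ex) (use nonempty_Basis in blast)
      then show ?thesis using True unfolding e_def by simp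
    next
      case False
      then show ?thesis unfolding e_def l_def by (simp add: power2_norm_eq_inner[symmetric])
    qed
    have ae: "x0 = xs + l *\<^sub>R e"
    proof (cases "a = 0")
      case True
      then have "l = 0" unfolding l_def by simp
      then show ?thesis using True unfolding a_def by simp
    next
      case False
      then have "l \<noteq> 0" unfolding l_def by simp
      then show ?thesis using False unfolding e_def a_def by simp
    qed
    define \<psi> where "\<psi> = (\<lambda>x. (x-xs)\<bullet>(x-xs) - ((x-xs)\<bullet>e)^2 + pp ((x-xs)\<bullet>e - l) + pp (-((x-xs)\<bullet>e)))"
    define D\<psi> where "D\<psi> = (\<lambda>x. 2 *\<^sub>R (x-xs) + (2*max 0 ((x-xs)\<bullet>e - l) - 2*max 0 (-((x-xs)\<bullet>e)) - 2*((x-xs)\<bullet>e)) *\<^sub>R e)"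
    have \<psi>d: "\<And>x. (\<psi> has_derivative (\<lambda>h. D\<psi> x \<bullet> h)) (at x)"
      unfolding \<psi>_def D\<psi>_def by (rule psi_deriv)
    have D\<psi>c: "continuous_on UNIV D\<psi>"
      unfolding D\<psi>_def by (intro continuous_intros)
    have \<psi>c: "continuous_on UNIV \<psi>"
      by (intro continuous_at_imp_continuous_on ballI has_derivative_continuous[OF \<psi>d])
    have \<psi>rad: "(x - xs) \<bullet> D\<psi> x \<ge> 0" for x
    proof -
      define w where "w = x - xs"
      define s where "s = w \<bullet> e"
      have cs: "s^2 \<le> w \<bullet> w" using Cauchy_Schwarz_ineq[of w e] e1 unfolding s_def by simp
      have "(x - xs) \<bullet> D\<psi> x = 2 * (w \<bullet> w) + (2 * max 0 (s - l) - 2 * max 0 (- s) - 2 * s) * s"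
        unfolding D\<psi>_def w_def s_def by (simp add: inner_add_right inner_commute)
      also have "\<dots> = 2 * (w \<bullet> w - s^2) + 2*(max 0 (s - l) * s) + 2 * (max 0 (-s) * (-s))"
        by (simp add: algebra_simps power2_eq_square)
      also have "\<dots> \<ge> 0"
      proof -
        have "max 0 (s - l) * s \<ge> 0" using l0 by (cases "s \<ge> l") auto
        moreover have "max 0 (-s) * (-s) \<ge> 0" by (cases "s \<ge> 0") auto
        ultimately show ?thesis using cs by (smt (verit))
      qed
      finally show ?thesis .
    qed
    have \<psi>seg: "\<exists>z\<in>closed_segment xs x0. \<psi> x = (norm (x - z))^2" for x
    proof -
      define w where "w = x - xs"
      define s where "s = w \<bullet> e"
      define \<sigma> where "\<sigma> = max 0 (min l s)"
      define z where "z = xs + \<sigma> *\<^sub>R e"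
      have "(norm (x - z))^2 = (w - \<sigma> *\<^sub>R e) \<bullet> (w - \<sigma> *\<^sub>R e)"
        unfolding z_def w_def by (simp add: power2_norm_eq_inner algebra_simps)
      also have "\<dots> = w \<bullet> w - 2 * \<sigma> * s + \<sigma>^2"
        using e1 unfolding s_def by (simp add: inner_diff_left inner_diff_right inner_commute power2_eq_square)
      also have "\<dots> = \<psi> x"
        unfolding \<psi>_def w_def[symmetric] s_def[symmetric] \<sigma>_def pp_def
        using l0 by (cases "s \<le> 0"; cases "s \<le> l") (auto simp: power2_eq_square algebra_simps max_def min_def)
      finally have eq: "\<psi> x = (norm (x - z))^2" ..
      have "z \<in> closed_segment xs x0"
      proof (cases "l = 0")
        case True
        then show ?thesis unfolding z_def \<sigma>_def by simp
      next
        case False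
        then have lp: "l > 0" using l0 by simp
        have "0 \<le> \<sigma> / l" "\<sigma> / l \<le> 1" using lp unfolding \<sigma>_def by auto
        moreover have "z = (1 - \<sigma> / l) *\<^sub>R xs + (\<sigma> / l) *\<^sub>R x0"
          unfolding z_def ae using lp by (simp add: algebra_simps)
        ultimately show ?thesis unfolding in_segment by blast
      qed
      then show ?thesis using eq by blast
    qed
    have \<psi>0: "\<psi> x \<ge> 0" for x using \<psi>seg[of x] by auto
    have \<psi>x0: "\<psi> x0 = 0"
      unfolding \<psi>_def ae using e1 l0 by (simp add: pp_def power2_eq_square)
    obtain r where r: "r > 0" "(\<Union>z\<in>closed_segment xs x0. cball z r) \<subseteq> \<Omega>"
      using compact_subset_open_imp_cball_epsilon_subset[OF compact_segment \<open>open \<Omega>\<close>] assms(5) x0 by blast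
    define C where "C = {x. \<psi> x \<le> r^2}"
    have C\<Omega>: "C \<subseteq> \<Omega>"
    proof
      fix x assume "x \<in> C"
      then have h: "\<psi> x \<le> r^2" unfolding C_def by simp
      obtain z where z: "z \<in> closed_segment xs x0" "\<psi> x = (norm (x - z))^2" using \<psi>seg by blast
      have "(norm (x - z))^2 \<le> r^2" using h z by simp
      then have "norm (x - z) \<le> r" using r(1) power2_le_imp_le by fastforce
      then have "x \<in> cball z r" by (simp add: dist_norm norm_minus_commute)
      then show "x \<in> \<Omega>" using r z by blast
    qed
    have Ccomp: "compact C"
    proof -
      have "bounded C" using C\<Omega> assms(3) bounded_subset by blast
      moreover have "closed C" unfolding C_def
        by (rule closed_Collect_le[OF \<psi>c continuous_on_const])
      ultimately show ?thesis by (simp add: compact_eq_bounded_closed)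
    qed
    have x0C: "x0 \<in> C" unfolding C_def using \<psi>x0 by simp
    obtain xu where xu: "xu \<in> C" "\<forall>x\<in>C. u x \<le> u xu"
      using usc_attains_max[OF Ccomp _ usc_subset[OF _ C\<Omega>]] assms(7) x0C unfolding visc_subsol_def by blast
    obtain xv where xv: "xv \<in> C" "\<forall>x\<in>C. - v x \<le> - v xv"
      using usc_attains_max[OF Ccomp _ lsc_neg[OF lsc_subset[OF _ C\<Omega>]]] assms(9) x0C unfolding visc_supersol_def by blast
    define R where "R = u xu - v xv"
    have R\<delta>: "R \<ge> \<delta>" using xu xv x0C unfolding R_def \<delta>_def by force
    have bnd: "u x - v y \<le> R" if "x \<in> C" "y \<in> C" for x y using xu xv that unfolding R_def by force
    define c where "c = \<delta> / (l^2 + 1)"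
    have lp1: "l^2 + 1 > 0" by (smt (verit) zero_le_power2)
    have c0: "c > 0" unfolding c_def using \<delta> lp1 by (rule divide_pos_pos)
    have cl: "c * l^2 \<le> \<delta>"
    proof -
      have "c * l^2 = \<delta> * (l^2 / (l^2 + 1))" unfolding c_def by simp
      have "l^2 / (l^2 + 1) \<le> 1" using lp1 by (simp add: divide_le_eq)
      then have "\<delta> * (l^2 / (l^2 + 1)) \<le> \<delta> * 1" using \<delta> by (intro mult_left_mono) auto
      also have "\<dots> = \<delta>" by simp
      finally have "\<delta> * (l^2 / (l^2 + 1)) \<le> \<delta>" .
      then show ?thesis using \<open>c * l^2 = _\<close> by simp
    qed
    have RR: "R / (R + 1) < 1" "R + 1 > 0" using R\<delta> \<delta> by (simp_all add: divide_less_eq)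
    define \<eta> where "\<eta> = r^2 / (R + 1)"
    have \<eta>0: "\<eta> > 0" unfolding \<eta>_def using r RR by simp
    have \<eta>R: "\<eta> * R < r^2"
    proof -
      have "\<eta> * R = r^2 * (R / (R+1))" unfolding \<eta>_def by simp
      also have "\<dots> < r^2 * 1" using r RR by (intro mult_strict_left_mono) auto
      finally show ?thesis by simp
    qed
    have gC: "uniformly_continuous_on C g"
      by (rule compact_uniformly_continuous[OF continuous_on_subset[OF assms(6) C\<Omega>] Ccomp])
    obtain d where d: "d > 0" "\<And>x y. x \<in> C \<Longrightarrow> y \<in> C \<Longrightarrow> dist x y < d \<Longrightarrow> dist (g x) (g y) < \<delta>/2"
      using gC \<delta> unfolding uniformly_continuous_on_def by (metis half_gt_zero)
    define \<epsilon> where "\<epsilon> = d^2 / (2 * (R + 1))"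
    have \<epsilon>0: "\<epsilon> > 0" unfolding \<epsilon>_def using d RR by simp
    have \<epsilon>R: "2 * \<epsilon> * R < d^2"
    proof -
      have "2 * \<epsilon> * R = d^2 * (R / (R+1))" unfolding \<epsilon>_def using RR(2) by (simp add: field_simps)
      also have "\<dots> < d^2 * 1" using d RR by (intro mult_strict_left_mono) auto
      finally show ?thesis by simp
    qed
    define k1 where "k1 = 1 / (2 * \<epsilon>)"
    define k2 where "k2 = c / 2"
    define k3 where "k3 = 1 / \<eta>"
    have k1: "k1 > 0" and k2: "k2 > 0" and k3: "k3 > 0"
      unfolding k1_def k2_def k3_def using \<epsilon>0 c0 \<eta>0 by auto
    define Pen where "Pen = (\<lambda>p::'a\<times>'a. - (k1 * ((fst p - snd p)\<bullet>(fst p - snd p))) - k2 * ((fst p - xs)\<bullet>(fst p - xs)) - k3 * \<psi> (fst p) - k3 * \<psi> (snd p))"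
    define \<Phi> where "\<Phi> = (\<lambda>p::'a\<times>'a. (u (fst p) + - v (snd p)) + Pen p)"
    have Penc: "continuous_on UNIV Pen"
      unfolding Pen_def by (intro continuous_intros continuous_on_compose2[OF \<psi>c]) auto
    have usc\<Phi>: "usc_on (C \<times> C) \<Phi>"
      unfolding \<Phi>_def
    proof (rule usc_add[OF usc_add[OF usc_fst usc_snd[OF lsc_neg]] cont_usc])
      show "usc_on C u" using assms(7) C\<Omega> usc_subset unfolding visc_subsol_def by blast
      show "lsc_on C v" using assms(9) C\<Omega> lsc_subset unfolding visc_supersol_def by blast
      show "continuous_on (C \<times> C) Pen" using Penc continuous_on_subset by blast
    qed
    obtain m where m: "m \<in> C \<times> C" "\<forall>q\<in>C \<times> C. \<Phi> q \<le> \<Phi> m"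
      using usc_attains_max[OF compact_Times[OF Ccomp Ccomp] _ usc\<Phi>] x0C by blast
    obtain xm ym where mxy: "m = (xm, ym)" by (cases m)
    have xmC: "xm \<in> C" and ymC: "ym \<in> C" using m mxy by auto
    have "\<Phi> (x0, x0) = \<delta> - c/2 * l^2"
      unfolding \<Phi>_def Pen_def \<delta>_def k2_def using \<psi>x0 ae e1 by (simp add: power2_eq_square)
    then have \<Phi>m: "\<Phi> (xm, ym) \<ge> \<delta>/2" using m mxy x0C cl by force
    have pen: "u xm - v ym = \<Phi> (xm, ym) + k1 * ((xm - ym)\<bullet>(xm - ym)) + k2 * ((xm - xs)\<bullet>(xm - xs)) + k3 * \<psi> xm + k3 * \<psi> ym"
      unfolding \<Phi>_def Pen_def by simp
    have nN: "(xm - ym)\<bullet>(xm - ym) \<ge> 0" "(xm - xs)\<bullet>(xm - xs) \<ge> 0" by simp_all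
    have t1: "k1 * ((xm - ym)\<bullet>(xm - ym)) \<ge> 0" "k2 * ((xm - xs)\<bullet>(xm - xs)) \<ge> 0"
      "k3 * \<psi> xm \<ge> 0" "k3 * \<psi> ym \<ge> 0"
      using k1 k2 k3 nN \<psi>0 by simp_all
    have R1: "u xm - v ym \<le> R" using bnd xmC ymC by blast
    have uv: "u xm - v ym \<ge> \<delta>/2" using pen \<Phi>m t1 by linarith
    have "k1 * ((xm - ym)\<bullet>(xm - ym)) \<le> R" using pen R1 \<Phi>m t1 \<delta> by linarith
    then have "(xm - ym)\<bullet>(xm - ym) \<le> 2 * \<epsilon> * R"
      unfolding k1_def using \<epsilon>0 by (simp add: field_simps)
    then have "(norm (xm - ym))^2 < d^2" using \<epsilon>R by (simp add: power2_norm_eq_inner)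
    then have dxy: "dist xm ym < d" using d(1) by (simp add: dist_norm power_less_imp_less_base)
    have "k3 * \<psi> xm \<le> R" "k3 * \<psi> ym \<le> R" using pen R1 \<Phi>m t1 \<delta> by linarith+
    then have "\<psi> xm \<le> \<eta> * R" "\<psi> ym \<le> \<eta> * R"
      unfolding k3_def using \<eta>0 by (simp_all add: field_simps)
    then have \<psi>m: "\<psi> xm < r^2" "\<psi> ym < r^2" using \<eta>R by linarith+
    have Uo: "open {x. \<psi> x < r^2}"
      by (rule open_Collect_less[OF \<psi>c continuous_on_const, simplified])
    have UC: "{x. \<psi> x < r^2} \<subseteq> C" unfolding C_def by auto
    obtain d1 where d1: "d1 > 0" "ball xm d1 \<subseteq> {x. \<psi> x < r^2}"
      using Uo \<psi>m(1) open_contains_ball by blast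
    obtain d2 where d2: "d2 > 0" "ball ym d2 \<subseteq> {x. \<psi> x < r^2}"
      using Uo \<psi>m(2) open_contains_ball by blast
    define phi1 where "phi1 = (\<lambda>x. k1 * ((x - ym)\<bullet>(x - ym)) + k2 * ((x - xs)\<bullet>(x - xs)) + k3 * \<psi> x)"
    define Dphi1 where "Dphi1 = (\<lambda>x. k1 *\<^sub>R (2 *\<^sub>R (x - ym)) + k2 *\<^sub>R (2 *\<^sub>R (x - xs)) + k3 *\<^sub>R D\<psi> x)"
    have C1a: "C1_on \<Omega> phi1 Dphi1"
      unfolding C1_on_def
    proof
      show "\<forall>x\<in>\<Omega>. (phi1 has_derivative (\<bullet>) (Dphi1 x)) (at x)"
        unfolding phi1_def Dphi1_def by (intro ballI hd_add hd_scale sq_hasderiv \<psi>d)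
      show "continuous_on \<Omega> Dphi1"
        unfolding Dphi1_def by (intro continuous_intros continuous_on_subset[OF D\<psi>c]) auto
    qed
    have lm1: "\<exists>d>0. \<forall>y\<in>\<Omega>. dist y xm < d \<longrightarrow> u y - phi1 y \<le> u xm - phi1 xm"
    proof (intro exI[of _ d1] conjI ballI impI)
      show "d1 > 0" by fact
      fix y assume "y \<in> \<Omega>" "dist y xm < d1"
      then have "y \<in> ball xm d1" by (simp add: dist_commute)
      then have "y \<in> C" using d1 UC by blast
      then have "\<Phi> (y, ym) \<le> \<Phi> (xm, ym)" using m mxy ymC by auto
      then show "u y - phi1 y \<le> u xm - phi1 xm"
        unfolding \<Phi>_def Pen_def phi1_def by simp
    qed
    have "F_ham g xs xm (u xm) (Dphi1 xm) \<le> 0"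
      using assms(7) C1a lm1 xmC C\<Omega> unfolding visc_subsol_def by blast
    then have sub: "u xm - g xm \<le> 0 \<or> (xm - xs) \<bullet> Dphi1 xm \<le> 0"
      unfolding F_ham_def by linarith
    define phi2 where "phi2 = (\<lambda>y. (- k1) * ((y - xm)\<bullet>(y - xm)) + (- k3) * \<psi> y)"
    define Dphi2 where "Dphi2 = (\<lambda>y. (- k1) *\<^sub>R (2 *\<^sub>R (y - xm)) + (- k3) *\<^sub>R D\<psi> y)"
    have C1b: "C1_on \<Omega> phi2 Dphi2"
      unfolding C1_on_def
    proof
      show "\<forall>x\<in>\<Omega>. (phi2 has_derivative (\<bullet>) (Dphi2 x)) (at x)"
        unfolding phi2_def Dphi2_def by (intro ballI hd_add hd_scale sq_hasderiv \<psi>d)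
      show "continuous_on \<Omega> Dphi2"
        unfolding Dphi2_def by (intro continuous_intros continuous_on_subset[OF D\<psi>c]) auto
    qed
    have symsq: "(a - b) \<bullet> (a - b) = (b - a) \<bullet> (b - a)" for a b :: 'a
      by (metis norm_minus_commute power2_norm_eq_inner)
    have lm2: "\<exists>d>0. \<forall>y\<in>\<Omega>. dist y ym < d \<longrightarrow> v ym - phi2 ym \<le> v y - phi2 y"
    proof (intro exI[of _ d2] conjI ballI impI)
      show "d2 > 0" by fact
      fix y assume "y \<in> \<Omega>" "dist y ym < d2"
      then have "y \<in> ball ym d2" by (simp add: dist_commute)
      then have "y \<in> C" using d2 UC by blast
      then have "\<Phi> (xm, y) \<le> \<Phi> (xm, ym)" using m mxy xmC by auto
      then show "v ym - phi2 ym \<le> v y - phi2 y"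
        unfolding \<Phi>_def Pen_def phi2_def using symsq[of xm y] symsq[of xm ym] by simp
    qed
    have "F_ham g xs ym (v ym) (Dphi2 ym) \<ge> 0"
      using assms(9) C1b lm2 ymC C\<Omega> unfolding visc_supersol_def by blast
    then have sup1: "v ym \<ge> g ym" and sup2: "(ym - xs) \<bullet> Dphi2 ym \<ge> 0"
      unfolding F_ham_def by linarith+
    show False
    proof (cases "u xm - g xm \<le> 0")
      case True
      have "dist (g xm) (g ym) < \<delta>/2" using d(2)[OF xmC ymC dxy] .
      then have "g xm - g ym < \<delta>/2" unfolding dist_real_def by linarith
      then show False using True sup1 uv by linarith
    next
      case False
      then have s1: "(xm - xs) \<bullet> Dphi1 xm \<le> 0" using sub by simp
      define A where "A = (xm - xs) \<bullet> (xm - ym)"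
      define B where "B = (ym - xs) \<bullet> (ym - xm)"
      define X where "X = (xm - xs) \<bullet> (xm - xs)"
      define N where "N = (xm - ym) \<bullet> (xm - ym)"
      have B': "B = - ((ym - xs) \<bullet> (xm - ym))" unfolding B_def
        by (metis inner_minus_right minus_diff_eq)
      have "A + B = ((xm - xs) - (ym - xs)) \<bullet> (xm - ym)" unfolding A_def B' by (simp only: inner_diff_left)
      also have "\<dots> = N" unfolding N_def by simp
      finally have ABN: "A + B = N" .
      have "(xm - xs) \<bullet> Dphi1 xm = k1 * 2 * A + k2 * 2 * X + k3 * ((xm - xs) \<bullet> D\<psi> xm)"
        unfolding Dphi1_def A_def X_def by (simp add: inner_add_right)
      moreover have "k3 * ((xm - xs) \<bullet> D\<psi> xm) \<ge> 0" using k3 \<psi>rad[of xm] by simp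
      ultimately have e1': "k1 * 2 * A + k2 * 2 * X \<le> 0" using s1 by linarith
      have "(ym - xs) \<bullet> Dphi2 ym = - (k1 * 2 * B) - k3 * ((ym - xs) \<bullet> D\<psi> ym)"
        unfolding Dphi2_def B_def unfolding inner_add_right inner_scaleR_right by (simp add: algebra_simps)
      moreover have "k3 * ((ym - xs) \<bullet> D\<psi> ym) \<ge> 0" using k3 \<psi>rad[of ym] by simp
      ultimately have e2': "k1 * 2 * B \<le> 0" using sup2 by linarith
      have "k1 * 2 * N = k1 * 2 * A + k1 * 2 * B" by (simp only: ABN[symmetric] distrib_left)
      then have "k1 * 2 * N + k2 * 2 * X \<le> 0" using e1' e2' by linarith
      moreover have "k1 * N \<ge> 0" "k2 * X \<ge> 0" using k1 k2 nN unfolding N_def X_def by simp_all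
      ultimately have "k2 * X = 0" "k1 * N = 0" by linarith+
      then have "X = 0" "N = 0" using k1 k2 by simp_all
      then have xe: "xm = xs" "ym = xm" unfolding X_def N_def by simp_all
      have "u xm \<le> g xm" using xe(1) assms(8) by simp
      moreover have "g xm \<le> v ym" using sup1 xe(2) by simp
      ultimately show False using uv \<delta> by linarith
    qed
  qed
qed

end
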